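(* Let $M\ge1$ and $n\ge2$ be integers, $d\in\{1,\dots,n-1\}$, and $0<p<1$. Let $c_1,\dots,c_n$ be independent Bernoulli($p$) bits (the tagged code word), and let $U_1,\dots,U_n$ be random bits, independent of each other and of the $c_i$, with $\Pr(U_i=0)=(1-p)^M$ for $i\le d$ and $\Pr(U_i=0)=(1-p)^{M-1}$ for $i>d$. Say position $i$ is covered if $c_i=0$, or $U_i=1$, or ($i>d$ and $c_{i-d}=1$). Then \[\Pr(\text{every position } i\in\{1,\dots,n\}\text{ is covered})\le\big(1-p(1-p)^M\big)^n.\]
   Context: This models a tagged code word covered by its own copy shifted by $d$ positions together with the other active users: $U_i$ is the Boolean OR of the bits of the other active users at position $i$ ($M$ of them at positions $i\le d$, $M-1$ at positions $i>d$), each of these bits being independently $1$ with probability $p$. *)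

theory Defs
  imports "HOL-Probability.Probability"
begin

text \<open>Bits are modelled as booleans (True = 1). The tagged code word c and the
  covering bits U are independent product distributions on positions 1..n.\<close>

definition codeword_pmf :: "nat \<Rightarrow> real \<Rightarrow> (nat \<Rightarrow> bool) pmf" where
  "codeword_pmf n p = Pi_pmf {1..n} False (\<lambda>i. bernoulli_pmf p)"

definition cover_pmf :: "nat \<Rightarrow> nat \<Rightarrow> nat \<Rightarrow> real \<Rightarrow> (nat \<Rightarrow> bool) pmf" where
  "cover_pmf M n d p = Pi_pmf {1..n} False
     (\<lambda>i. bernoulli_pmf (1 - (1 - p) ^ (if i \<le> d then M else M - 1)))"

definition covered :: "nat \<Rightarrow> (nat \<Rightarrow> bool) \<Rightarrow> (nat \<Rightarrow> bool) \<Rightarrow> nat \<Rightarrow> bool" where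
  "covered d c U i \<longleftrightarrow> \<not> c i \<or> U i \<or> (i > d \<and> c (i - d))"

end

theory Submission
  imports Defs
begin

definition fac :: "nat \<Rightarrow> nat \<Rightarrow> real \<Rightarrow> (nat \<Rightarrow> bool) \<Rightarrow> nat \<Rightarrow> real" where
  "fac d M p c i = (if \<not> c i \<or> (d < i \<and> c (i - d)) then 1
                    else 1 - (1 - p) ^ (if i \<le> d then M else M - 1))"

definition FF :: "nat \<Rightarrow> nat \<Rightarrow> real \<Rightarrow> nat \<Rightarrow> (nat \<Rightarrow> bool \<Rightarrow> real) \<Rightarrow> (nat \<Rightarrow> bool) \<Rightarrow> real" where
  "FF d M p n g c = (\<Prod>i\<in>{1..n}. fac d M p c i) * (\<Prod>i\<in>{n-d<..n}. g i (c i))"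

definition WW :: "nat \<Rightarrow> real \<Rightarrow> (bool \<Rightarrow> real) \<Rightarrow> real" where
  "WW M p h = p * (1 - (1-p)^M) * h True + (1 - p) * h False"

definition MM :: "nat \<Rightarrow> real \<Rightarrow> (bool \<Rightarrow> real) \<Rightarrow> bool \<Rightarrow> real" where
  "MM M p h s = (if s then p * h True + (1-p) * h False
                 else p * (1 - (1-p)^(M-1)) * h True + (1-p) * h False)"

lemma fac_nonneg: "0 \<le> p \<Longrightarrow> p \<le> 1 \<Longrightarrow> 0 \<le> fac d M p c i"
  unfolding fac_def by (auto simp: power_le_one)

lemma WW_MM:
  assumes "0 \<le> p" "p \<le> 1" "1 \<le> M" "0 \<le> h True" "0 \<le> h False"
  shows "WW M p (MM M p h) \<le> (1 - p * (1-p)^M) * WW M p h"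
proof -
  define q where "q = 1 - p"
  define b where "b = q^(M-1)"
  have a: "(1-p)^M = q * b" using assms(3) unfolding b_def q_def
    by (metis One_nat_def Suc_diff_le diff_Suc_1 power_Suc)
  have e1: "WW M p (MM M p h) = p*(1-q*b)*(p*h True + q*h False) + q*(p*(1-b)*h True + q*h False)"
    unfolding WW_def MM_def a by (simp add: b_def q_def)
  have pq: "p = 1 - q" using q_def by simp
  have "WW M p (MM M p h) = p * (p*(1-q*b) + q - q*b) * h True + q*(1 - p*(q*b)) * h False"
  proof -
    have "p*(1-q*b)*(p*h True + q*h False) + q*(p*(1-b)*h True + q*h False)
       = p * (p*(1-q*b) + q - q*b) * h True + q*(1 - p*(q*b)) * h False"
      unfolding pq by (simp add: algebra_simps)
    then show ?thesis using e1 by simp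
  qed
  also have "\<dots> \<le> p * ((1-p*(q*b))*(1-q*b)) * h True + q*(1 - p*(q*b)) * h False"
  proof -
    have "p*(1-q*b) + q - q*b \<le> (1-p*(q*b))*(1-q*b)"
    proof -
      have "0 \<le> p * (q*b) * (q*b)" using assms by (simp add: q_def b_def)
      then show ?thesis by (simp add: algebra_simps pq)
    qed
    moreover have "0 \<le> q*b" "q*b \<le> 1" unfolding a[symmetric] using assms by (simp_all add: power_le_one)
    moreover have "p*(q*b) \<le> 1" using calculation assms by (simp add: mult_le_one)
    ultimately show ?thesis using assms by (intro add_mono mult_right_mono mult_left_mono) auto
  qed
  also have "\<dots> = (1 - p * (1-p)^M) * WW M p h"
    unfolding WW_def a by (simp add: algebra_simps pq)
  finally show ?thesis .
qed

lemma fac_upd: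
  assumes "i \<in> {1..n}" "1 \<le> d"
  shows "fac d M p (f(Suc n := y)) i = fac d M p f i"
  using assms unfolding fac_def by auto

lemma prod_fac_upd:
  assumes "1 \<le> d"
  shows "(\<Prod>i\<in>{1..n}. fac d M p (f(Suc n := y)) i) = (\<Prod>i\<in>{1..n}. fac d M p f i)"
  using fac_upd[OF _ assms] by (intro prod.cong) auto

lemma FF_Suc_small:
  assumes "n < d" "0 \<le> p" "p \<le> 1"
  shows "p * FF d M p (Suc n) g (f(Suc n := True)) + (1-p) * FF d M p (Suc n) g (f(Suc n := False))
     = WW M p (g (Suc n)) * FF d M p n g f"
proof -
  have d: "1 \<le> d" using assms by simp
  have s1: "{Suc n - d<..Suc n} = insert (Suc n) {n - d<..n}" using assms by auto
  have s2: "{1..Suc n} = insert (Suc n) {1..n}" by auto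
  have g: "(\<Prod>i\<in>{n - d<..n}. g i ((f(Suc n := y)) i)) = (\<Prod>i\<in>{n - d<..n}. g i (f i))" for y
    by (intro prod.cong) auto
  show ?thesis
    unfolding FF_def s1 s2 using prod_fac_upd[OF d] g assms
    by (simp add: WW_def fac_def algebra_simps)
qed

lemma FF_Suc_large:
  assumes "d \<le> n" "1 \<le> d" "0 \<le> p" "p \<le> 1"
  shows "p * FF d M p (Suc n) g (f(Suc n := True)) + (1-p) * FF d M p (Suc n) g (f(Suc n := False))
     = FF d M p n (g(Suc n - d := MM M p (g (Suc n)))) f"
proof -
  define k where "k = Suc n - d"
  have k: "n - d < k" "k \<le> n" "1 \<le> k" using assms unfolding k_def by auto
  have s0: "{n - d<..n} = insert k {k<..n}" using assms unfolding k_def by auto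
  have s1: "{Suc n - d<..Suc n} = insert (Suc n) {k<..n}" using assms unfolding k_def by auto
  have s2: "{1..Suc n} = insert (Suc n) {1..n}" by auto
  have g: "(\<Prod>i\<in>{k<..n}. g i ((f(Suc n := y)) i)) = (\<Prod>i\<in>{k<..n}. g i (f i))" for y
    by (intro prod.cong) auto
  have g2: "(\<Prod>i\<in>{k<..n}. (g(k := h)) i (f i)) = (\<Prod>i\<in>{k<..n}. g i (f i))" for h
    by (intro prod.cong) auto
  define A where "A = (\<Prod>i\<in>{1..n}. fac d M p f i)"
  define R where "R = (\<Prod>i\<in>{k<..n}. g i (f i))"
  have fs: "fac d M p (f(Suc n := y)) (Suc n) = (if \<not> y \<or> f k then 1 else 1 - (1-p)^(M-1))" for y
    using assms k unfolding fac_def k_def by auto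
  have L: "FF d M p (Suc n) g (f(Suc n := y)) = fac d M p (f(Suc n := y)) (Suc n) * A * (g (Suc n) y * R)" for y
  proof -
    have "(\<Prod>i\<in>{k<..Suc n}. g i ((f(Suc n := y)) i)) = g (Suc n) y * R"
    proof -
      have s1': "{k<..Suc n} = insert (Suc n) {k<..n}" using k by auto
      show ?thesis unfolding R_def s1' using g[of y] by simp
    qed
    moreover have "(\<Prod>i\<in>{1..Suc n}. fac d M p (f(Suc n := y)) i) = fac d M p (f(Suc n := y)) (Suc n) * A"
      unfolding s2 A_def using prod_fac_upd[OF assms(2)] by simp
    ultimately show ?thesis unfolding FF_def k_def[symmetric] by simp
  qed
  have Rr: "FF d M p n (g(k := MM M p (g (Suc n)))) f = A * (MM M p (g (Suc n)) (f k) * R)"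
    unfolding FF_def s0 A_def R_def using g2 k by simp
  show ?thesis unfolding k_def[symmetric] L Rr fs
    by (cases "f k") (simp_all add: MM_def algebra_simps)
qed


lemma FF_nonneg:
  assumes "0 \<le> p" "p \<le> 1" "\<forall>i b. 0 \<le> g i b"
  shows "0 \<le> FF d M p n g c"
  unfolding FF_def using assms fac_nonneg
  by (intro mult_nonneg_nonneg prod_nonneg) auto

lemma WW_nonneg:
  assumes "0 \<le> p" "p \<le> 1" "0 \<le> h True" "0 \<le> h False"
  shows "0 \<le> WW M p h"
  unfolding WW_def using assms by (auto intro!: add_nonneg_nonneg mult_nonneg_nonneg simp: power_le_one)

lemma MM_nonneg:
  assumes "0 \<le> p" "p \<le> 1" "0 \<le> h True" "0 \<le> h False"
  shows "0 \<le> MM M p h s"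
  unfolding MM_def using assms by (auto intro!: add_nonneg_nonneg mult_nonneg_nonneg simp: power_le_one)

lemma ennreal_lin:
  fixes a b x y :: real
  assumes "0 \<le> a" "0 \<le> b" "0 \<le> x" "0 \<le> y"
  shows "ennreal a * ennreal x + ennreal b * ennreal y = ennreal (a*x + b*y)"
  using assms by (simp add: ennreal_plus ennreal_mult)

lemma key:
  assumes p: "0 < p" "p < 1" and M: "1 \<le> M" and d: "1 \<le> d"
  shows "\<forall>i b. 0 \<le> g i b \<Longrightarrow>
    (\<integral>\<^sup>+c. ennreal (FF d M p n g c) \<partial>Pi_pmf {1..n} False (\<lambda>_. bernoulli_pmf p))
     \<le> ennreal ((1 - p*(1-p)^M)^(n-d) * (\<Prod>i\<in>{n-d<..n}. WW M p (g i)))"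
proof (induction n arbitrary: g)
  case 0
  then show ?case by (simp add: FF_def)
next
  case (Suc n)
  define P where "P = Pi_pmf {1..n} False (\<lambda>_. bernoulli_pmf p)"
  have s2: "{1..Suc n} = insert (Suc n) {1..n}" by auto
  have Pi_eq: "Pi_pmf {1..Suc n} False (\<lambda>_. bernoulli_pmf p)
      = map_pmf (\<lambda>(y,f). f(Suc n:=y)) (pair_pmf (bernoulli_pmf p) P)"
    unfolding s2 P_def by (rule Pi_pmf_insert) auto
  have nn: "0 \<le> FF d M p m h c" if "\<forall>i b. 0 \<le> h i b" for m h c
    using FF_nonneg[of p h] p that by auto
  have "(\<integral>\<^sup>+c. ennreal (FF d M p (Suc n) g c) \<partial>Pi_pmf {1..Suc n} False (\<lambda>_. bernoulli_pmf p))
     = (\<integral>\<^sup>+y. (\<integral>\<^sup>+f. ennreal (FF d M p (Suc n) g (f(Suc n := y))) \<partial>P) \<partial>bernoulli_pmf p)"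
    unfolding Pi_eq by (simp add: nn_integral_pair_pmf')
  also have "\<dots> = (\<integral>\<^sup>+f. ennreal (FF d M p (Suc n) g (f(Suc n := True))) \<partial>P) * ennreal p
        + (\<integral>\<^sup>+f. ennreal (FF d M p (Suc n) g (f(Suc n := False))) \<partial>P) * ennreal (1-p)"
    using p by (subst nn_integral_bernoulli_pmf) auto
  also have "\<dots> = (\<integral>\<^sup>+f. ennreal (FF d M p (Suc n) g (f(Suc n := True))) * ennreal p
        + ennreal (FF d M p (Suc n) g (f(Suc n := False))) * ennreal (1-p) \<partial>P)"
    by (simp add: nn_integral_add nn_integral_multc)
  also have "\<dots> = (\<integral>\<^sup>+f. ennreal (p * FF d M p (Suc n) g (f(Suc n := True))
        + (1-p) * FF d M p (Suc n) g (f(Suc n := False))) \<partial>P)"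
    using p nn[OF Suc.prems]
    by (intro nn_integral_cong) (simp add: ennreal_lin mult.commute)
  finally have E: "(\<integral>\<^sup>+c. ennreal (FF d M p (Suc n) g c) \<partial>Pi_pmf {1..Suc n} False (\<lambda>_. bernoulli_pmf p))
     = (\<integral>\<^sup>+f. ennreal (p * FF d M p (Suc n) g (f(Suc n := True))
        + (1-p) * FF d M p (Suc n) g (f(Suc n := False))) \<partial>P)" .
  define mu where "mu = 1 - p*(1-p)^M"
  have mu0: "0 \<le> mu"
  proof -
    have "(1-p)^M \<le> 1" using p by (simp add: power_le_one)
    then have "p*(1-p)^M \<le> 1" using p by (simp add: mult_le_one)
    then show ?thesis unfolding mu_def by simp
  qed
  have W0: "0 \<le> WW M p (g i)" for i using Suc.prems p by (intro WW_nonneg) auto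
  show ?case
  proof (cases "n < d")
    case True
    have "(\<integral>\<^sup>+f. ennreal (p * FF d M p (Suc n) g (f(Suc n := True))
        + (1-p) * FF d M p (Suc n) g (f(Suc n := False))) \<partial>P)
       = (\<integral>\<^sup>+f. ennreal (WW M p (g (Suc n))) * ennreal (FF d M p n g f) \<partial>P)"
      using FF_Suc_small[OF True, of p M g] p W0 nn[OF Suc.prems]
      by (intro nn_integral_cong) (simp add: ennreal_mult)
    also have "\<dots> = ennreal (WW M p (g (Suc n))) * (\<integral>\<^sup>+f. ennreal (FF d M p n g f) \<partial>P)"
      by (simp add: nn_integral_cmult)
    also have "\<dots> \<le> ennreal (WW M p (g (Suc n))) * ennreal (mu^(n-d) * (\<Prod>i\<in>{n-d<..n}. WW M p (g i)))"
      using Suc.IH[OF Suc.prems] unfolding P_def mu_def by (intro mult_left_mono) auto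
    also have "\<dots> = ennreal (mu^(Suc n-d) * (\<Prod>i\<in>{Suc n-d<..Suc n}. WW M p (g i)))"
    proof -
      have s: "{Suc n - d<..Suc n} = insert (Suc n) {n - d<..n}" using True by auto
      have "n - d = 0" "Suc n - d = 0" using True by auto
      then show ?thesis unfolding s using W0 by (simp add: ennreal_mult[symmetric] prod_nonneg)
    qed
    finally show ?thesis using E unfolding mu_def by simp
  next
    case False
    define k where "k = Suc n - d"
    define g' where "g' = g(k := MM M p (g (Suc n)))"
    have g'0: "\<forall>i b. 0 \<le> g' i b" unfolding g'_def using Suc.prems p
      by (auto intro!: MM_nonneg)
    have "(\<integral>\<^sup>+f. ennreal (p * FF d M p (Suc n) g (f(Suc n := True))
        + (1-p) * FF d M p (Suc n) g (f(Suc n := False))) \<partial>P)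
       = (\<integral>\<^sup>+f. ennreal (FF d M p n g' f) \<partial>P)"
      using FF_Suc_large[of d n p M g] False d p unfolding g'_def k_def
      by (intro nn_integral_cong) simp
    also have "\<dots> \<le> ennreal (mu^(n-d) * (\<Prod>i\<in>{n-d<..n}. WW M p (g' i)))"
      using Suc.IH[OF g'0] unfolding P_def mu_def by simp
    also have "\<dots> \<le> ennreal (mu^(Suc n-d) * (\<Prod>i\<in>{Suc n-d<..Suc n}. WW M p (g i)))"
    proof (rule ennreal_leI)
      have k: "n - d < k" "k \<le> n" "k = Suc (n - d)" using False d unfolding k_def by auto
      have s0: "{n - d<..n} = insert k {k<..n}" using k by auto
      have s1: "{Suc n - d<..Suc n} = insert (Suc n) {k<..n}" using k unfolding k_def by auto
      have e: "Suc n - d = Suc (n - d)" using False by auto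
      define Q where "Q = (\<Prod>i\<in>{k<..n}. WW M p (g i))"
      have Q0: "0 \<le> Q" unfolding Q_def using W0 by (simp add: prod_nonneg)
      have "(\<Prod>i\<in>{k<..n}. WW M p (g' i)) = Q" unfolding Q_def g'_def
        by (intro prod.cong) auto
      then have l: "mu^(n-d) * (\<Prod>i\<in>{n-d<..n}. WW M p (g' i)) = mu^(n-d) * (WW M p (MM M p (g (Suc n))) * Q)"
        unfolding s0 using k by (simp add: g'_def)
      have r: "mu^(Suc n-d) * (\<Prod>i\<in>{Suc n-d<..Suc n}. WW M p (g i)) = mu^(n-d) * ((mu * WW M p (g (Suc n))) * Q)"
      proof -
        have "(\<Prod>i\<in>{Suc n-d<..Suc n}. WW M p (g i)) = WW M p (g (Suc n)) * Q"
          unfolding s1 Q_def by simp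
        then show ?thesis unfolding e by (simp add: algebra_simps)
      qed
      have "WW M p (MM M p (g (Suc n))) \<le> mu * WW M p (g (Suc n))"
        unfolding mu_def using WW_MM[of p M "g (Suc n)"] p M Suc.prems by auto
      then show "mu^(n-d) * (\<Prod>i\<in>{n-d<..n}. WW M p (g' i)) \<le> mu^(Suc n-d) * (\<Prod>i\<in>{Suc n-d<..Suc n}. WW M p (g i))"
        unfolding l r using mu0 Q0 by (intro mult_left_mono mult_right_mono) auto
    qed
    finally show ?thesis using E unfolding mu_def by simp
  qed
qed


lemma inner_prob:
  assumes "0 < p" "p < 1"
  shows "measure_pmf.prob (cover_pmf M n d p) {U. \<forall>i\<in>{1..n}. covered d c U i}
       = (\<Prod>i\<in>{1..n}. fac d M p c i)"
proof -
  have set: "{U. \<forall>i\<in>{1..n}. covered d c U i} = Pi {1..n} (\<lambda>i. {b. \<not> c i \<or> b \<or> (d < i \<and> c (i - d))})"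
    unfolding covered_def Pi_def by auto
  have r: "0 \<le> (1-p)^m" "(1-p)^m \<le> 1" for m using assms by (simp_all add: power_le_one)
  have each: "measure_pmf.prob (bernoulli_pmf (1 - (1 - p) ^ (if i \<le> d then M else M - 1)))
        {b. \<not> c i \<or> b \<or> (d < i \<and> c (i - d))} = fac d M p c i" for i
  proof (cases "\<not> c i \<or> (d < i \<and> c (i - d))")
    case True
    then have "{b. \<not> c i \<or> b \<or> (d < i \<and> c (i - d))} = UNIV" by auto
    then show ?thesis using True unfolding fac_def by simp
  next
    case False
    have st: "{b. \<not> c i \<or> b \<or> (d < i \<and> c (i - d))} = {True}" using False by auto
    have f: "fac d M p c i = 1 - (1-p)^(if i \<le> d then M else M - 1)" using False unfolding fac_def by auto
    show ?thesis unfolding st f measure_pmf_single using r by simp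
  qed
  show ?thesis unfolding set cover_pmf_def
    by (subst measure_Pi_pmf_Pi, simp, rule prod.cong, rule refl, rule each)
qed

theorem mainTheorem3:
  fixes M n d :: nat and p :: real
  assumes "M \<ge> 1" and "n \<ge> 2" and "1 \<le> d" and "d \<le> n - 1"
    and "0 < p" and "p < 1"
  shows "measure_pmf.prob (pair_pmf (codeword_pmf n p) (cover_pmf M n d p))
           {(c, U). \<forall>i\<in>{1..n}. covered d c U i}
         \<le> (1 - p * (1 - p) ^ M) ^ n"
proof -
  define S where "S = {(c, U). \<forall>i\<in>{1..n}. covered d c U i}"
  define mu where "mu = 1 - p*(1-p)^M"
  have mu0: "0 \<le> mu"
  proof -
    have "(1-p)^M \<le> 1" using assms by (simp add: power_le_one)
    then have "p*(1-p)^M \<le> 1" using assms by (simp add: mult_le_one)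
    then show ?thesis unfolding mu_def by simp
  qed
  have "emeasure (measure_pmf (pair_pmf (codeword_pmf n p) (cover_pmf M n d p))) S
      = (\<integral>\<^sup>+c. \<integral>\<^sup>+U. indicator S (c, U) \<partial>cover_pmf M n d p \<partial>codeword_pmf n p)"
    by (simp add: nn_integral_pair_pmf'[symmetric])
  also have "\<dots> = (\<integral>\<^sup>+c. ennreal (FF d M p n (\<lambda>_ _. 1) c) \<partial>codeword_pmf n p)"
  proof (intro nn_integral_cong)
    fix c
    have "(\<integral>\<^sup>+U. indicator S (c, U) \<partial>cover_pmf M n d p)
        = emeasure (measure_pmf (cover_pmf M n d p)) {U. \<forall>i\<in>{1..n}. covered d c U i}"
    proof -
      have "(\<integral>\<^sup>+U. indicator S (c, U) \<partial>cover_pmf M n d p)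
          = (\<integral>\<^sup>+U. indicator {U. \<forall>i\<in>{1..n}. covered d c U i} U \<partial>cover_pmf M n d p)"
        by (intro nn_integral_cong) (simp add: S_def split: split_indicator)
      then show ?thesis by simp
    qed
    also have "\<dots> = ennreal (\<Prod>i\<in>{1..n}. fac d M p c i)"
      using inner_prob[OF assms(5,6)] by (simp add: measure_pmf.emeasure_eq_measure)
    finally show "(\<integral>\<^sup>+U. indicator S (c, U) \<partial>cover_pmf M n d p) = ennreal (FF d M p n (\<lambda>_ _. 1) c)"
      by (simp add: FF_def)
  qed
  also have "\<dots> \<le> ennreal (mu^(n-d) * (\<Prod>i\<in>{n-d<..n}. WW M p (\<lambda>_. 1)))"
    using key[OF assms(5,6,1,3), of "\<lambda>_ _. 1" n] unfolding codeword_pmf_def mu_def by simp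
  also have "mu^(n-d) * (\<Prod>i\<in>{n-d<..n}. WW M p (\<lambda>_. 1)) = mu ^ n"
  proof -
    have "WW M p (\<lambda>_. 1) = mu" unfolding WW_def mu_def by (simp add: algebra_simps)
    moreover have "(n - d) + card {n-d<..n} = n" by simp
    ultimately show ?thesis by (metis power_add prod_constant)
  qed
  finally have "ennreal (measure_pmf.prob (pair_pmf (codeword_pmf n p) (cover_pmf M n d p)) S) \<le> ennreal (mu ^ n)"
    by (simp add: measure_pmf.emeasure_eq_measure)
  then show ?thesis using mu0 unfolding S_def mu_def by (simp add: ennreal_le_iff)
qed

end
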